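(* For every positive integer $n$, any deterministic finite automaton separating $\mathrm{EvenCycles}_{n,2}$ from $\mathrm{OddCycles}_{n,2}$ has at least $n+1$ states.
   Context: Let $\Sigma=[n]\times[d]$ where $[m]=\{1,\dots,m\}$. A deterministic finite automaton over $\Sigma$ consists of a finite set $Q$ of states, an initial state $q_{start}\in Q$ and a transition function $\delta\colon Q\times\Sigma\to Q$, extended to words in the usual way. For disjoint $A,B\subseteq\Sigma^{\mathbb N}$, the automaton separates $A$ from $B$ if there is a state $q_{accept}$ such that for every infinite word $w=w_1w_2\ldots\in\Sigma^{\mathbb N}$: if $w\in A$ then there is $i_0$ with $\delta(q_{start},w_1\ldots w_i)=q_{accept}$ for all $i\ge i_0$; if $w\in B$ then $\delta(q_{start},w_1\ldots w_i)\neq q_{accept}$ for all $i\ge 1$. A game graph with $n$ nodes and $d$ priorities is a pair $G=\langle E,\pi\rangle$ where $E\subseteq[n]^2$ is a set of directed edges (loops allowed, no parallel edges) such that every node $u\in[n]$ has at least one outgoing edge, and $\pi\colon E\to[d]$. $G$ is even (resp. odd) if for every $k\ge1$ and every $v_1,\dots,v_k$ with $(v_1,v_2),\dots,(v_{k-1},v_k),(v_k,v_1)\in E$, the maximum of $\pi$ over these $k$ edges is even (resp. odd). $\mathrm{EvenCycles}_{n,d}$ (resp. $\mathrm{OddCycles}_{n,d}$) is the set of infinite words $(v_1,l_1)(v_2,l_2)\ldots\in\Sigma^{\mathbb N}$ for which there exists an even (resp. odd) game graph $G=\langle E,\pi\rangle$ with at most $n$ nodes and $d$ priorities such that $(v_i,v_{i+1})\in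 E$ and $\pi((v_i,v_{i+1}))=l_i$ for all $i\ge1$. *)

theory Defs
  imports Main
begin

definition alphabet :: "nat \<Rightarrow> nat \<Rightarrow> (nat \<times> nat) set" where
  "alphabet n d = {1..n} \<times> {1..d}"

text \<open>Infinite words are sequences indexed from 0: the word w_1 w_2 ... is w 0, w 1, ....
  run delta q w i is the state reached from q after reading the first i letters.\<close>
fun run :: "('q \<Rightarrow> 'a \<Rightarrow> 'q) \<Rightarrow> 'q \<Rightarrow> (nat \<Rightarrow> 'a) \<Rightarrow> nat \<Rightarrow> 'q" where
  "run \<delta> q w 0 = q"
| "run \<delta> q w (Suc i) = \<delta> (run \<delta> q w i) (w i)"

definition is_dfa :: "nat \<Rightarrow> nat \<Rightarrow> 'q set \<Rightarrow> 'q \<Rightarrow> ('q \<Rightarrow> nat \<times> nat \<Rightarrow> 'q) \<Rightarrow> bool" where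
  "is_dfa n d Q q0 \<delta> \<longleftrightarrow> finite Q \<and> q0 \<in> Q \<and>
     (\<forall>q\<in>Q. \<forall>a\<in>alphabet n d. \<delta> q a \<in> Q)"

definition separates ::
  "nat \<Rightarrow> nat \<Rightarrow> 'q set \<Rightarrow> 'q \<Rightarrow> ('q \<Rightarrow> nat \<times> nat \<Rightarrow> 'q)
    \<Rightarrow> (nat \<Rightarrow> nat \<times> nat) set \<Rightarrow> (nat \<Rightarrow> nat \<times> nat) set \<Rightarrow> bool" where
  "separates n d Q q0 \<delta> A B \<longleftrightarrow>
     (\<exists>qa\<in>Q. \<forall>w. (\<forall>i. w i \<in> alphabet n d) \<longrightarrow>
        ((w \<in> A \<longrightarrow> (\<exists>i0. \<forall>i\<ge>i0. run \<delta> q0 w i = qa)) \<and>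
         (w \<in> B \<longrightarrow> (\<forall>i\<ge>1. run \<delta> q0 w i \<noteq> qa))))"

definition game_graph :: "nat \<Rightarrow> nat \<Rightarrow> (nat \<times> nat) set \<Rightarrow> (nat \<times> nat \<Rightarrow> nat) \<Rightarrow> bool" where
  "game_graph m d E \<pi> \<longleftrightarrow> E \<subseteq> {1..m} \<times> {1..m} \<and>
     (\<forall>u\<in>{1..m}. \<exists>v. (u, v) \<in> E) \<and> (\<forall>e\<in>E. \<pi> e \<in> {1..d})"

text \<open>Cycle v_1 .. v_k (k >= 1) given as vs 0 .. vs (k-1); edges (vs j, vs ((j+1) mod k)).\<close>
definition is_cycle :: "(nat \<times> nat) set \<Rightarrow> nat \<Rightarrow> (nat \<Rightarrow> nat) \<Rightarrow> bool" where
  "is_cycle E k vs \<longleftrightarrow> k \<ge> 1 \<and> (\<forall>j<k. (vs j, vs (Suc j mod k)) \<in> E)"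

definition cycle_max :: "(nat \<times> nat \<Rightarrow> nat) \<Rightarrow> nat \<Rightarrow> (nat \<Rightarrow> nat) \<Rightarrow> nat" where
  "cycle_max \<pi> k vs = Max {\<pi> (vs j, vs (Suc j mod k)) | j. j < k}"

definition even_graph :: "(nat \<times> nat) set \<Rightarrow> (nat \<times> nat \<Rightarrow> nat) \<Rightarrow> bool" where
  "even_graph E \<pi> \<longleftrightarrow> (\<forall>k vs. is_cycle E k vs \<longrightarrow> even (cycle_max \<pi> k vs))"

definition odd_graph :: "(nat \<times> nat) set \<Rightarrow> (nat \<times> nat \<Rightarrow> nat) \<Rightarrow> bool" where
  "odd_graph E \<pi> \<longleftrightarrow> (\<forall>k vs. is_cycle E k vs \<longrightarrow> odd (cycle_max \<pi> k vs))"

definition follows :: "(nat \<times> nat) set \<Rightarrow> (nat \<times> nat \<Rightarrow> nat) \<Rightarrow> (nat \<Rightarrow> nat \<times> nat) \<Rightarrow> bool" where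
  "follows E \<pi> w \<longleftrightarrow> (\<forall>i. (fst (w i), fst (w (Suc i))) \<in> E \<and>
                           \<pi> (fst (w i), fst (w (Suc i))) = snd (w i))"

definition EvenCycles :: "nat \<Rightarrow> nat \<Rightarrow> (nat \<Rightarrow> nat \<times> nat) set" where
  "EvenCycles n d = {w. (\<forall>i. w i \<in> alphabet n d) \<and>
     (\<exists>m E \<pi>. m \<le> n \<and> game_graph m d E \<pi> \<and> even_graph E \<pi> \<and> follows E \<pi> w)}"

definition OddCycles :: "nat \<Rightarrow> nat \<Rightarrow> (nat \<Rightarrow> nat \<times> nat) set" where
  "OddCycles n d = {w. (\<forall>i. w i \<in> alphabet n d) \<and>
     (\<exists>m E \<pi>. m \<le> n \<and> game_graph m d E \<pi> \<and> odd_graph E \<pi> \<and> follows E \<pi> w)}"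

end

theory Submission
  imports Defs
begin

lemma cycle_mono_const:
  assumes cyc: "is_cycle E K vs" and mono: "\<And>a b. (a, b) \<in> E \<Longrightarrow> a \<le> (b::nat)"
  shows "\<forall>j<K. vs j = vs 0"
proof -
  have K: "K \<ge> 1" and ed: "\<And>j. j < K \<Longrightarrow> (vs j, vs (Suc j mod K)) \<in> E"
    using cyc unfolding is_cycle_def by auto
  have step: "\<And>j. Suc j < K \<Longrightarrow> vs j \<le> vs (Suc j)"
  proof -
    fix j assume "Suc j < K"
    then show "vs j \<le> vs (Suc j)" using ed[of j] mono by simp
  qed
  have chain: "\<And>d l. l + d < K \<Longrightarrow> vs l \<le> vs (l + d)"
  proof -
    fix d l show "l + d < K \<Longrightarrow> vs l \<le> vs (l + d)"
    proof (induction d)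
      case 0 then show ?case by simp
    next
      case (Suc d)
      then have "vs l \<le> vs (l + d)" by simp
      also have "\<dots> \<le> vs (Suc (l + d))" using step Suc.prems by simp
      finally show ?case by simp
    qed
  qed
  have last: "vs (K - 1) \<le> vs 0"
  proof -
    have "Suc (K - 1) mod K = 0" using K by simp
    then show ?thesis using ed[of "K - 1"] mono K by fastforce
  qed
  show ?thesis
  proof (intro allI impI)
    fix j assume j: "j < K"
    have "vs 0 \<le> vs j" using chain[of 0 j] j by simp
    moreover have "vs j \<le> vs (K - 1)" using chain[of j "K - 1 - j"] j by simp
    ultimately show "vs j = vs 0" using last by simp
  qed
qed

definition oword :: "nat \<Rightarrow> nat \<Rightarrow> nat \<times> nat" where
  "oword k t = (if t < k then (t + 1, 2) else (k + 1, 1))"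

lemma oword_odd:
  assumes "k < n"
  shows "oword k \<in> OddCycles n 2"
proof -
  define E where "E = {(a, b). 1 \<le> a \<and> a \<le> k + 1 \<and> b = min (a + 1) (k + 1)}"
  define \<pi> where "\<pi> = (\<lambda>e::nat \<times> nat. if fst e = snd e then 1 else (2::nat))"
  have alph: "\<forall>i. oword k i \<in> alphabet n 2"
    using assms by (auto simp: oword_def alphabet_def)
  have gg: "game_graph (k + 1) 2 E \<pi>"
    unfolding game_graph_def
  proof (intro conjI ballI)
    show "E \<subseteq> {1..k + 1} \<times> {1..k + 1}" unfolding E_def by auto
  next
    fix u assume "u \<in> {1..k + 1}"
    then have "(u, min (u + 1) (k + 1)) \<in> E" unfolding E_def by simp
    then show "\<exists>v. (u, v) \<in> E" by blast
  next
    fix e show "\<pi> e \<in> {1..2}" unfolding \<pi>_def by simp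
  qed
  have fol: "follows E \<pi> (oword k)"
    unfolding follows_def
  proof
    fix t
    consider "Suc t < k" | "Suc t = k" | "t \<ge> k" by linarith
    then show "(fst (oword k t), fst (oword k (Suc t))) \<in> E \<and>
           \<pi> (fst (oword k t), fst (oword k (Suc t))) = snd (oword k t)"
    proof cases
      case 1 then show ?thesis by (simp add: oword_def E_def \<pi>_def)
    next
      case 2 then show ?thesis by (simp add: oword_def E_def \<pi>_def)
    next
      case 3 then show ?thesis by (simp add: oword_def E_def \<pi>_def)
    qed
  qed
  have og: "odd_graph E \<pi>"
    unfolding odd_graph_def
  proof (intro allI impI)
    fix K vs assume cyc: "is_cycle E K vs"
    have c: "\<forall>j<K. vs j = vs 0"
      by (rule cycle_mono_const[OF cyc]) (auto simp: E_def)
    have K: "K \<ge> 1" using cyc unfolding is_cycle_def by auto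
    have "{\<pi> (vs j, vs (Suc j mod K)) | j. j < K} = {1}"
    proof -
      have pi1: "\<pi> (vs j, vs (Suc j mod K)) = 1" if j: "j < K" for j
      proof -
        have "Suc j mod K < K" using K by simp
        then have "vs (Suc j mod K) = vs j" using c j by metis
        then show ?thesis by (simp add: \<pi>_def)
      qed
      have "0 < K" using K by simp
    moreover have "\<pi> (vs 0, vs (Suc 0 mod K)) = 1" using pi1[OF \<open>0 < K\<close>] .
    ultimately have "1 \<in> {\<pi> (vs j, vs (Suc j mod K)) | j. j < K}" by (metis (mono_tags, lifting) mem_Collect_eq)
    then show ?thesis using pi1 by blast
    qed
    then show "odd (cycle_max \<pi> K vs)" unfolding cycle_max_def by simp
  qed
  show ?thesis unfolding OddCycles_def
    using alph gg fol og assms by (intro CollectI conjI) (auto intro!: exI[of _ "k+1"] exI[of _ E] exI[of _ \<pi>])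
qed

fun fe :: "nat \<Rightarrow> nat \<Rightarrow> nat \<Rightarrow> nat" where
  "fe i j 0 = 0"
| "fe i j (Suc t) = (if Suc (fe i j t) < j then Suc (fe i j t) else i)"

definition eword :: "nat \<Rightarrow> nat \<Rightarrow> nat \<Rightarrow> nat \<times> nat" where
  "eword i j t = (fe i j t + 1, 2)"

lemma fe_lt: "i < j \<Longrightarrow> fe i j t < j"
  by (induction t) auto

lemma fe_init: "i < j \<Longrightarrow> t \<le> i \<Longrightarrow> fe i j t = t"
  by (induction t) auto

lemma fe_period: assumes "i < j" "fe i j t = i" shows "fe i j (t + (j - i)) = i"
proof -
  have a: "s < j - i \<Longrightarrow> fe i j (t + s) = i + s" for s
    by (induction s) (use assms in auto)
  have "fe i j (Suc (t + (j - i - 1))) = i" using a[of "j - i - 1"] assms by simp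
  moreover have "Suc (t + (j - i - 1)) = t + (j - i)" using assms by simp
  ultimately show ?thesis by metis
qed

lemma fe_many: assumes "i < j" shows "fe i j (i + c * (j - i)) = i"
proof (induction c)
  case 0 then show ?case using fe_init[OF assms] by simp
next
  case (Suc c)
  have "i + Suc c * (j - i) = (i + c * (j - i)) + (j - i)" by simp
  then show ?case using fe_period[OF assms Suc.IH] by metis
qed

lemma eword_even:
  assumes "i < j" "j \<le> n"
  shows "eword i j \<in> EvenCycles n 2"
proof -
  define E where "E = {(a, b). 1 \<le> a \<and> a \<le> j \<and> b = (if a < j then a + 1 else i + 1)}"
  define \<pi> where "\<pi> = (\<lambda>e::nat \<times> nat. (2::nat))"
  have alph: "\<forall>t. eword i j t \<in> alphabet n 2"
    using assms fe_lt[OF assms(1)] by (auto simp: eword_def alphabet_def Suc_le_eq intro: less_le_trans)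
  have gg: "game_graph j 2 E \<pi>"
    unfolding game_graph_def E_def \<pi>_def using assms by auto
  have fol: "follows E \<pi> (eword i j)"
    unfolding follows_def E_def \<pi>_def eword_def using fe_lt[OF assms(1)] by (auto simp: Suc_le_eq)
  have eg: "even_graph E \<pi>"
    unfolding even_graph_def
  proof (intro allI impI)
    fix K vs assume cyc: "is_cycle E K vs"
    have K: "K \<ge> 1" using cyc unfolding is_cycle_def by auto
    have "{\<pi> (vs j, vs (Suc j mod K)) | j. j < K} = {2}"
      using K by (auto simp: \<pi>_def intro!: exI[of _ 0])
    then show "even (cycle_max \<pi> K vs)" unfolding cycle_max_def by simp
  qed
  show ?thesis unfolding EvenCycles_def
    using alph gg fol eg assms by (intro CollectI conjI) (auto intro!: exI[of _ j] exI[of _ E] exI[of _ \<pi>])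
qed

theorem proposition5:
  fixes n :: nat and Q :: "'q set" and q0 :: 'q and \<delta> :: "'q \<Rightarrow> nat \<times> nat \<Rightarrow> 'q"
  assumes "n \<ge> 1"
    and "is_dfa n 2 Q q0 \<delta>"
    and "separates n 2 Q q0 \<delta> (EvenCycles n 2) (OddCycles n 2)"
  shows "card Q \<ge> n + 1"
proof -
  obtain qa where qa: "qa \<in> Q" and sep: "\<And>w. (\<forall>i. w i \<in> alphabet n 2) \<Longrightarrow>
        ((w \<in> EvenCycles n 2 \<longrightarrow> (\<exists>i0. \<forall>i\<ge>i0. run \<delta> q0 w i = qa)) \<and>
         (w \<in> OddCycles n 2 \<longrightarrow> (\<forall>i\<ge>1. run \<delta> q0 w i \<noteq> qa)))"
    using assms(3) unfolding separates_def by blast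
  have fin: "finite Q" and q0Q: "q0 \<in> Q" and cl: "\<And>q a. q \<in> Q \<Longrightarrow> a \<in> alphabet n 2 \<Longrightarrow> \<delta> q a \<in> Q"
    using assms(2) unfolding is_dfa_def by auto
  have odd_never: "run \<delta> q0 (oword k) t \<noteq> qa" if "k < n" "t \<ge> 1" for k t
  proof -
    have oc: "oword k \<in> OddCycles n 2" using oword_odd[OF that(1)] .
    moreover have "\<forall>i. oword k i \<in> alphabet n 2" using oc unfolding OddCycles_def by blast
    ultimately show ?thesis using sep[of "oword k"] that by blast
  qed
  define b where "b = (\<lambda>t::nat. (t + 1, 2::nat))"
  define r where "r = run \<delta> q0 b"
  have run_o: "t \<le> k \<Longrightarrow> run \<delta> q0 (oword k) t = r t" for t k
    by (induction t) (auto simp: r_def b_def oword_def)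
  show ?thesis
  proof (cases "n = 1")
    case True
    have "run \<delta> q0 (oword 0) 1 \<noteq> qa" using odd_never[of 0 1] True by simp
    then have ne: "\<delta> q0 (1, 1) \<noteq> qa" by (simp add: oword_def)
    have "\<delta> q0 (1, 1) \<in> Q" using cl[OF q0Q, of "(1,1)"] assms(1) by (simp add: alphabet_def)
    then have "{qa, \<delta> q0 (1, 1)} \<subseteq> Q" using qa by auto
    then have "card {qa, \<delta> q0 (1, 1)} \<le> card Q" using fin by (rule card_mono[rotated])
    then show ?thesis using ne True by simp
  next
    case False
    then have n2: "n \<ge> 2" using assms(1) by simp
    have rQ: "t \<le> n \<Longrightarrow> r t \<in> Q" for t
    proof (induction t)
      case 0 then show ?case using q0Q by (simp add: r_def)
    next
      case (Suc t)
      then show ?case using cl[of "r t" "b t"] by (simp add: r_def b_def alphabet_def)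
    qed
    have nrep: False if ij: "i < j" "j \<le> n" "r i = r j" for i j
    proof -
      have runE: "run \<delta> q0 (eword i j) t = r (fe i j t)" for t
      proof (induction t)
        case 0 then show ?case by (simp add: r_def)
      next
        case (Suc t)
        have "run \<delta> q0 (eword i j) (Suc t) = r (Suc (fe i j t))"
          using Suc by (simp only: run.simps) (simp add: r_def b_def eword_def)
        also have "\<dots> = r (fe i j (Suc t))"
        proof (cases "Suc (fe i j t) < j")
          case True then show ?thesis by simp
        next
          case False
          then have "Suc (fe i j t) = j" using fe_lt[OF ij(1), of t] by simp
          then show ?thesis using False ij(3) by simp
        qed
        finally show ?case .
      qed
      have ev: "eword i j \<in> EvenCycles n 2" using eword_even[OF ij(1,2)] .
      moreover have "\<forall>t. eword i j t \<in> alphabet n 2" using ev unfolding EvenCycles_def by blast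
      ultimately obtain i0 where i0: "\<And>t. t \<ge> i0 \<Longrightarrow> run \<delta> q0 (eword i j) t = qa"
        using sep[of "eword i j"] by blast
      define t where "t = i + i0 * (j - i)"
      have "i0 * 1 \<le> i0 * (j - i)" using ij by (intro mult_le_mono2) simp
      then have tge: "t \<ge> i0" unfolding t_def by linarith
      have fet: "fe i j t = i" unfolding t_def using fe_many[OF ij(1)] .
      have ri: "r i = qa" using i0[OF tge] runE[of t] fet by simp
      have ri1: "r (Suc i) = qa"
      proof (cases "Suc i < j")
        case True
        then have "fe i j (Suc t) = Suc i" using fet by simp
        then show ?thesis using i0[of "Suc t"] tge runE[of "Suc t"] by simp
      next
        case False
        then have "j = Suc i" using ij by simp
        then show ?thesis using ri ij(3) by simp
      qed
      define k where "k = (if i = 0 then 1 else i)"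
      have k: "k < n \<and> k \<ge> 1 \<and> r k = qa"
      proof (cases "i = 0")
        case True
        then show ?thesis using n2 ri1 unfolding k_def by simp
      next
        case False
        then show ?thesis using ij ri unfolding k_def by simp
      qed
      have "run \<delta> q0 (oword k) k = r k" using run_o by simp
      then show False using odd_never[of k k] k by simp
    qed
    have inj: "inj_on r {0..n}"
    proof (rule inj_onI)
      fix x y assume "x \<in> {0..n}" "y \<in> {0..n}" "r x = r y"
      then show "x = y"
      proof (cases x y rule: linorder_cases)
        case less then show ?thesis using nrep[of x y] \<open>y \<in> {0..n}\<close> \<open>r x = r y\<close> by simp
      next
        case greater then show ?thesis using nrep[of y x] \<open>x \<in> {0..n}\<close> \<open>r x = r y\<close> by simp
      qed
    qed
    have "r ` {0..n} \<subseteq> Q" using rQ by auto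
    then have "card (r ` {0..n}) \<le> card Q" using fin by (rule card_mono[rotated])
    then show ?thesis using card_image[OF inj] by simp
  qed
qed

end
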